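(* Let $U\supseteq U'$ and $V$ be finitely generated free abelian groups and let $f:U\times V\to\mathbb{Z}$ be a bilinear function whose restriction to $U'\times V$ has rank at least two. Then for every $u\in U$ the set $f(u+U',V)=\{f(u+u',v)\mid u'\in U',v\in V\}\subseteq\mathbb{Z}$ is a subgroup of $\mathbb{Z}$ containing $f(U',V)$.
   Context: The rank of a bilinear function $U'\times V\to\mathbb{Z}$ is the rank of its matrix with respect to bases of $U'$ and $V$. *)

theory Defs
  imports "Jordan_Normal_Form.DL_Rank"
begin

text \<open>Finitely generated free abelian groups are modelled as \<open>\<int>^m\<close>, i.e. the
  integer vectors \<open>carrier_vec m\<close>.  A subgroup of an abelian group given as a set.\<close>

definition int_subgroup :: "int set \<Rightarrow> bool" where
  "int_subgroup S \<longleftrightarrow> 0 \<in> S \<and> (\<forall>x\<in>S. \<forall>y\<in>S. x + y \<in> S) \<and> (\<forall>x\<in>S. - x \<in> S)"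

definition vec_subgroup :: "nat \<Rightarrow> int vec set \<Rightarrow> bool" where
  "vec_subgroup m W \<longleftrightarrow> W \<subseteq> carrier_vec m \<and> 0\<^sub>v m \<in> W
     \<and> (\<forall>x\<in>W. \<forall>y\<in>W. x + y \<in> W) \<and> (\<forall>x\<in>W. - x \<in> W)"

definition int_comb :: "nat \<Rightarrow> int vec list \<Rightarrow> (nat \<Rightarrow> int) \<Rightarrow> int vec" where
  "int_comb m bs c = vec m (\<lambda>j. \<Sum>i<length bs. c i * (bs ! i) $ j)"

definition is_Z_basis :: "nat \<Rightarrow> int vec set \<Rightarrow> int vec list \<Rightarrow> bool" where
  "is_Z_basis m W bs \<longleftrightarrow> set bs \<subseteq> carrier_vec m
     \<and> (\<forall>c. int_comb m bs c = 0\<^sub>v m \<longrightarrow> (\<forall>i<length bs. c i = 0))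
     \<and> W = {int_comb m bs c | c. True}"

definition bilinear_on :: "nat \<Rightarrow> nat \<Rightarrow> (int vec \<Rightarrow> int vec \<Rightarrow> int) \<Rightarrow> bool" where
  "bilinear_on m n f \<longleftrightarrow>
     (\<forall>u1\<in>carrier_vec m. \<forall>u2\<in>carrier_vec m. \<forall>v\<in>carrier_vec n. f (u1 + u2) v = f u1 v + f u2 v)
   \<and> (\<forall>u\<in>carrier_vec m. \<forall>v1\<in>carrier_vec n. \<forall>v2\<in>carrier_vec n. f u (v1 + v2) = f u v1 + f u v2)"

text \<open>Matrix of \<open>f\<close> restricted to \<open>W \<times> \<int>^n\<close> w.r.t. the basis \<open>bs\<close> of \<open>W\<close>
  and the standard basis of \<open>\<int>^n\<close>, and its rank (rank of an integer matrix,
  computed over \<open>\<rat>\<close>).\<close>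
definition restr_matrix :: "nat \<Rightarrow> (int vec \<Rightarrow> int vec \<Rightarrow> int) \<Rightarrow> int vec list \<Rightarrow> rat mat" where
  "restr_matrix n f bs = mat (length bs) n (\<lambda>(i, j). rat_of_int (f (bs ! i) (unit_vec n j)))"

definition restr_rank :: "nat \<Rightarrow> nat \<Rightarrow> (int vec \<Rightarrow> int vec \<Rightarrow> int) \<Rightarrow> int vec set \<Rightarrow> nat" where
  "restr_rank m n f W = (let bs = (SOME bs. is_Z_basis m W bs)
     in vec_space.rank (length bs) (restr_matrix n f bs))"

end

theory Submission
  imports Defs "HOL-Computational_Algebra.Primes"
begin


lemma zero_smult_vec_int: "(0::int) \<cdot>\<^sub>v v = 0\<^sub>v (dim_vec v)"
  by (rule eq_vecI) auto

lemma neg_smult_vec_int: "(- (k::int)) \<cdot>\<^sub>v v = - (k \<cdot>\<^sub>v v)"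
  by (rule eq_vecI) auto

lemma bil_add1:
  assumes "bilinear_on m n f" "u1 \<in> carrier_vec m" "u2 \<in> carrier_vec m" "v \<in> carrier_vec n"
  shows "f (u1 + u2) v = f u1 v + f u2 v"
  using assms unfolding bilinear_on_def by blast

lemma bil_add2:
  assumes "bilinear_on m n f" "u \<in> carrier_vec m" "v1 \<in> carrier_vec n" "v2 \<in> carrier_vec n"
  shows "f u (v1 + v2) = f u v1 + f u v2"
  using assms unfolding bilinear_on_def by blast

lemma bil_smult2:
  assumes B: "bilinear_on m n f" and u: "u \<in> carrier_vec m" and v: "v \<in> carrier_vec n"
  shows "f u (k \<cdot>\<^sub>v v) = k * f u v"
proof -
  have nat: "f u (int j \<cdot>\<^sub>v v) = int j * f u v" for j
  proof (induction j)
    case 0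
    have "f u (0\<^sub>v n) = f u (0\<^sub>v n + 0\<^sub>v n)" by simp
    also have "\<dots> = f u (0\<^sub>v n) + f u (0\<^sub>v n)" by (rule bil_add2[OF B u]) auto
    finally have "f u (0\<^sub>v n) = 0" by simp
    then show ?case using v by (simp add: zero_smult_vec_int)
  next
    case (Suc j)
    have "int (Suc j) \<cdot>\<^sub>v v = 1 \<cdot>\<^sub>v v + int j \<cdot>\<^sub>v v"
      by (metis add_smult_distrib_vec of_nat_Suc add.commute)
    then have "f u (int (Suc j) \<cdot>\<^sub>v v) = f u v + f u (int j \<cdot>\<^sub>v v)"
      using bil_add2[OF B u] v by simp
    then show ?case using Suc by (simp add: algebra_simps)
  qed
  show ?thesis
  proof (cases "k \<ge> 0")
    case True
    then show ?thesis using nat[of "nat k"] by simp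
  next
    case False
    have z: "f u (0\<^sub>v n) = 0" using nat[of 0] v by (simp add: zero_smult_vec_int)
    have "f u (k \<cdot>\<^sub>v v + (-k) \<cdot>\<^sub>v v) = f u ((k + -k) \<cdot>\<^sub>v v)"
      by (simp only: add_smult_distrib_vec)
    also have "\<dots> = 0" using z v by (simp add: zero_smult_vec_int)
    finally have "f u (k \<cdot>\<^sub>v v) + f u ((-k) \<cdot>\<^sub>v v) = 0"
      using bil_add2[OF B u] v by simp
    moreover have "f u ((-k) \<cdot>\<^sub>v v) = (-k) * f u v" using nat[of "nat (-k)"] False by simp
    ultimately show ?thesis by simp
  qed
qed

lemma bil_smult1:
  assumes B: "bilinear_on m n f" and u: "u \<in> carrier_vec m" and v: "v \<in> carrier_vec n"
  shows "f (k \<cdot>\<^sub>v u) v = k * f u v"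
proof -
  have nat: "f (int j \<cdot>\<^sub>v u) v = int j * f u v" for j
  proof (induction j)
    case 0
    have "f (0\<^sub>v m) v = f (0\<^sub>v m + 0\<^sub>v m) v" by simp
    also have "\<dots> = f (0\<^sub>v m) v + f (0\<^sub>v m) v" by (rule bil_add1[OF B _ _ v]) auto
    finally have "f (0\<^sub>v m) v = 0" by simp
    then show ?case using u by (simp add: zero_smult_vec_int)
  next
    case (Suc j)
    have "int (Suc j) \<cdot>\<^sub>v u = 1 \<cdot>\<^sub>v u + int j \<cdot>\<^sub>v u"
      by (metis add_smult_distrib_vec of_nat_Suc add.commute)
    then have "f (int (Suc j) \<cdot>\<^sub>v u) v = f u v + f (int j \<cdot>\<^sub>v u) v"
      using bil_add1[OF B _ _ v] u by simp
    then show ?case using Suc by (simp add: algebra_simps)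
  qed
  show ?thesis
  proof (cases "k \<ge> 0")
    case True
    then show ?thesis using nat[of "nat k"] by simp
  next
    case False
    have z: "f (0\<^sub>v m) v = 0" using nat[of 0] u by (simp add: zero_smult_vec_int)
    have "f (k \<cdot>\<^sub>v u + (-k) \<cdot>\<^sub>v u) v = f ((k + -k) \<cdot>\<^sub>v u) v"
      by (simp only: add_smult_distrib_vec)
    also have "\<dots> = 0" using z u by (simp add: zero_smult_vec_int)
    finally have "f (k \<cdot>\<^sub>v u) v + f ((-k) \<cdot>\<^sub>v u) v = 0"
      using bil_add1[OF B _ _ v] u by simp
    moreover have "f ((-k) \<cdot>\<^sub>v u) v = (-k) * f u v" using nat[of "nat (-k)"] False by simp
    ultimately show ?thesis by simp
  qed
qed

lemma subgrp_smult:
  assumes S: "vec_subgroup m W" and p: "p \<in> W"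
  shows "k \<cdot>\<^sub>v p \<in> W"
proof -
  have pc: "p \<in> carrier_vec m" using S p unfolding vec_subgroup_def by auto
  have nat: "int j \<cdot>\<^sub>v p \<in> W" for j
  proof (induction j)
    case 0 then show ?case using S pc by (simp add: zero_smult_vec_int vec_subgroup_def)
  next
    case (Suc j)
    have "int (Suc j) \<cdot>\<^sub>v p = 1 \<cdot>\<^sub>v p + int j \<cdot>\<^sub>v p"
      by (metis add_smult_distrib_vec of_nat_Suc add.commute)
    then show ?case using Suc S p unfolding vec_subgroup_def by simp
  qed
  show ?thesis
  proof (cases "k \<ge> 0")
    case True then show ?thesis using nat[of "nat k"] by simp
  next
    case False
    have "(- (-k)) \<cdot>\<^sub>v p = - ((-k) \<cdot>\<^sub>v p)" by (rule neg_smult_vec_int)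
    then show ?thesis using nat[of "nat (-k)"] False S unfolding vec_subgroup_def by simp
  qed
qed


lemma lemA:
  fixes a d N :: int
  assumes N: "N \<noteq> 0" and g: "gcd a (gcd d N) = 1"
  shows "\<exists>t. coprime (a + t * d) N"
proof -
  define P where "P = {p. prime p \<and> p dvd N \<and> \<not> p dvd a}"
  have finP: "finite P" unfolding P_def
    by (rule finite_subset[OF _ finite_prime_divisors[OF N]]) auto
  define t where "t = \<Prod> P"
  have "coprime (a + t * d) N"
  proof (rule coprimeI)
    fix c assume c1: "c dvd a + t * d" and c2: "c dvd N"
    show "is_unit c"
    proof (rule ccontr)
      assume nu: "\<not> is_unit c"
      have "c \<noteq> 0" using c2 N by auto
      then obtain p where pc: "p dvd c" and pp: "prime p" using prime_divisor_exists[OF _ nu] by blast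
      have p1: "p dvd a + t * d" using pc c1 by (rule dvd_trans)
      have p2: "p dvd N" using pc c2 by (rule dvd_trans)
      show False
      proof (cases "p dvd a")
        case True
        then have "p dvd t * d" using p1 by (simp add: dvd_add_right_iff)
        then have "p dvd t \<or> p dvd d" using pp by (simp add: prime_dvd_mult_iff)
        then show False
        proof
          assume "p dvd t"
          then obtain q where "q \<in> P" "p dvd q" unfolding t_def
            using prime_dvd_prod_iff[OF finP pp, of id] by auto
          then have "prime q" by (simp add: P_def)
          then have "p = q" using pp \<open>p dvd q\<close> by (simp add: primes_dvd_imp_eq)
          then show False using \<open>q \<in> P\<close> True by (simp add: P_def)
        next
          assume "p dvd d"
          then have "p dvd gcd a (gcd d N)" using True p2 by simp
          then have "is_unit p" using g by simp
          then show False using pp by (simp add: not_prime_unit)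
        qed
      next
        case False
        then have "p \<in> P" using pp p2 by (simp add: P_def)
        then have "p dvd t" unfolding t_def using dvd_prodI[OF finP, of p "\<lambda>x. x"] by simp
        then have "p dvd t * d" by simp
        then have "p dvd a" using p1 by (simp add: dvd_add_left_iff)
        then show False using False by simp
      qed
    qed
  qed
  then show ?thesis by blast
qed
lemma lemB:
  fixes g a b :: int
  assumes g: "g > 0" and b: "b \<noteq> 0"
  shows "\<exists>t. gcd (g + t * a) (t * b) dvd g \<and> gcd (g + t * a) (t * b) dvd a
              \<and> gcd (g + t * a) (t * b) dvd b"
proof -
  define h where "h = gcd g (gcd a b)"
  have hpos: "h > 0" using g by (simp add: h_def)
  have "h dvd g" "h dvd a" "h dvd b" unfolding h_def
    using dvd_trans[OF gcd_dvd2 gcd_dvd1] dvd_trans[OF gcd_dvd2 gcd_dvd2] by auto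
  then obtain g' a' b' where g': "g = h * g'" and a': "a = h * a'" and b': "b = h * b'"
    by (meson dvdE)
  have "h = gcd (h * g') (gcd (h * a') (h * b'))" by (subst (1) h_def) (simp only: g' a' b')
  also have "\<dots> = h * gcd g' (gcd a' b')" using hpos by (simp add: gcd_mult_left)
  finally have cop: "gcd g' (gcd a' b') = 1" using hpos by simp
  have b'0: "b' \<noteq> 0" using b b' by auto
  have g'0: "g' \<noteq> 0" using g g' by auto
  obtain t0 where t0: "coprime (g' + t0 * a') b'" using lemA[OF b'0 cop] by blast
  have "gcd t0 (gcd b' g') = 1"
  proof -
    have d1: "gcd t0 (gcd b' g') dvd t0" by simp
    have d2: "gcd t0 (gcd b' g') dvd g'" using dvd_trans[OF gcd_dvd2 gcd_dvd2] by blast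
    have d3: "gcd t0 (gcd b' g') dvd b'" using dvd_trans[OF gcd_dvd2 gcd_dvd1] by blast
    have "gcd t0 (gcd b' g') dvd g' + t0 * a'" using d1 d2 by simp
    moreover note d3
    ultimately have "is_unit (gcd t0 (gcd b' g'))" using t0 by (meson coprime_common_divisor)
    then show ?thesis by simp
  qed
  then have "\<exists>s. coprime (t0 + s * b') g'" by (rule lemA[OF g'0])
  then obtain s where s: "coprime (t0 + s * b') g'" by blast
  define t where "t = t0 + s * b'"
  have e: "g' + t * a' = (g' + t0 * a') + (s * a') * b'" by (simp add: t_def algebra_simps)
  have c1: "coprime (g' + t * a') b'"
  proof -
    have "gcd b' ((s * a') * b' + (g' + t0 * a')) = gcd b' (g' + t0 * a')" by (rule gcd_add_mult)
    then have "gcd (g' + t * a') b' = gcd (g' + t0 * a') b'" unfolding e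
      by (simp add: gcd.commute add.commute)
    then show ?thesis using t0 by (simp add: coprime_iff_gcd_eq_1)
  qed
  have c2: "coprime (g' + t * a') t"
  proof -
    have "coprime t g'" using s t_def by simp
    moreover have "gcd t (a' * t + g') = gcd t g'" by (rule gcd_add_mult)
    ultimately show ?thesis by (simp add: coprime_iff_gcd_eq_1 gcd.commute add.commute mult.commute)
  qed
  have "coprime (g' + t * a') (t * b')" using c1 c2 by simp
  then have "gcd (g' + t * a') (t * b') = 1" by simp
  moreover have "gcd (g + t * a) (t * b) = h * gcd (g' + t * a') (t * b')"
  proof -
    have "gcd (g + t * a) (t * b) = gcd (h * (g' + t * a')) (h * (t * b'))"
      using g' a' b' by (simp add: algebra_simps)
    also have "\<dots> = h * gcd (g' + t * a') (t * b')" using hpos by (simp add: gcd_mult_left)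
    finally show ?thesis .
  qed
  ultimately have "gcd (g + t * a) (t * b) = h" by simp
  then show ?thesis using \<open>h dvd g\<close> \<open>h dvd a\<close> \<open>h dvd b\<close> by metis
qed



lemma key:
  assumes S: "vec_subgroup m U'" and B: "bilinear_on m n f" and u: "u \<in> carrier_vec m"
    and NR: "\<not> (\<exists>(a::int vec \<Rightarrow> int) (s::int vec \<Rightarrow> int). \<forall>q\<in>U'. \<forall>v\<in>carrier_vec n. f q v = a q * s v)"
  shows "int_subgroup {f (u + u') v | u' v. u' \<in> U' \<and> v \<in> carrier_vec n}
         \<and> {f u' v | u' v. u' \<in> U' \<and> v \<in> carrier_vec n}
             \<subseteq> {f (u + u') v | u' v. u' \<in> U' \<and> v \<in> carrier_vec n}"
proof -
  define T where "T = {f (u + u') v | u' v. u' \<in> U' \<and> v \<in> carrier_vec n}"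
  have Uc: "\<And>p. p \<in> U' \<Longrightarrow> p \<in> carrier_vec m" using S unfolding vec_subgroup_def by auto
  have U0: "0\<^sub>v m \<in> U'" using S unfolding vec_subgroup_def by auto
  have Uadd: "\<And>p q. p \<in> U' \<Longrightarrow> q \<in> U' \<Longrightarrow> p + q \<in> U'" using S unfolding vec_subgroup_def by auto
  have Tmem: "\<And>p v. p \<in> U' \<Longrightarrow> v \<in> carrier_vec n \<Longrightarrow> f (u + p) v \<in> T" unfolding T_def by blast
  have fadd: "\<And>p v. p \<in> U' \<Longrightarrow> v \<in> carrier_vec n \<Longrightarrow> f (u + p) v = f u v + f p v"
    using bil_add1[OF B u] Uc by blast
  have "int_subgroup T \<and> {f u' v | u' v. u' \<in> U' \<and> v \<in> carrier_vec n} \<subseteq> T"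
  proof (cases "\<exists>t\<in>T. t > 0")
    case False
    have all0: "f (u + p) v = 0" if p: "p \<in> U'" and v: "v \<in> carrier_vec n" for p v
    proof -
      have "f (u + p) v \<le> 0" using False Tmem[OF p v] by force
      moreover have "f (u + p) ((-1) \<cdot>\<^sub>v v) \<le> 0" using False Tmem[OF p smult_carrier_vec[THEN iffD2, OF v, of "-1"]] by force
      moreover have "f (u + p) ((-1) \<cdot>\<^sub>v v) = - f (u + p) v"
        using bil_smult2[OF B _ v] u Uc[OF p] by simp
      ultimately show ?thesis by simp
    qed
    have T0: "T = {0}"
    proof
      show "T \<subseteq> {0}" unfolding T_def using all0 by blast
      have "f (u + 0\<^sub>v m) (0\<^sub>v n) = 0" using all0[OF U0] by simp
      then show "{0} \<subseteq> T" using Tmem[OF U0, of "0\<^sub>v n"] by simp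
    qed
    have "f p v \<in> T" if p: "p \<in> U'" and v: "v \<in> carrier_vec n" for p v
    proof -
      have "f u v = 0" using all0[OF U0 v] u by simp
      then have "f p v = 0" using all0[OF p v] fadd[OF p v] by simp
      then show ?thesis using T0 by simp
    qed
    then show ?thesis unfolding T0 int_subgroup_def by auto
  next
    case True
    then obtain t0 where t0: "t0 \<in> T" "t0 > 0" by blast
    define P where "P = (\<lambda>k::nat. int k \<in> T \<and> k > 0)"
    have "P (nat t0)" using t0 by (simp add: P_def)
    then obtain k where kP: "P k" and kmin: "\<forall>y. P y \<longrightarrow> id k \<le> id y"
      using ex_has_least_nat[of P "nat t0" id] by blast
    define g where "g = int k"
    have gT: "g \<in> T" and gpos: "g > 0" using kP by (auto simp: P_def g_def)
    have gmin: "g \<le> t" if "t \<in> T" "t > 0" for t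
    proof -
      have "P (nat t)" using that by (simp add: P_def)
      then have "k \<le> nat t" using kmin by simp
      then show ?thesis using g_def that(2) by simp
    qed
    obtain p0 v0 where p0: "p0 \<in> U'" and v0: "v0 \<in> carrier_vec n" and gdef: "g = f (u + p0) v0"
      using gT unfolding T_def by blast
    define x where "x = u + p0"
    have xc: "x \<in> carrier_vec m" using u Uc[OF p0] by (simp add: x_def)
    have Tx: "f (x + p) v \<in> T" if "p \<in> U'" "v \<in> carrier_vec n" for p v
    proof -
      have "x + p = u + (p0 + p)" unfolding x_def using u Uc[OF p0] Uc[OF that(1)] by (simp add: assoc_add_vec)
      then show ?thesis using Tmem[OF Uadd[OF p0 that(1)] that(2)] by simp
    qed
    have Tx0: "f x v \<in> T" if "v \<in> carrier_vec n" for v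
      using Tx[OF U0 that] xc by simp
    have fxg: "f x v0 = g" using gdef x_def by simp
    have fsm2: "\<And>y c v. y \<in> carrier_vec m \<Longrightarrow> v \<in> carrier_vec n \<Longrightarrow> f y (c \<cdot>\<^sub>v v) = c * f y v"
      using bil_smult2[OF B] by blast
    have fsm1: "\<And>y c v. y \<in> carrier_vec m \<Longrightarrow> v \<in> carrier_vec n \<Longrightarrow> f (c \<cdot>\<^sub>v y) v = c * f y v"
      using bil_smult1[OF B] by blast
    have fa1: "\<And>y z v. y \<in> carrier_vec m \<Longrightarrow> z \<in> carrier_vec m \<Longrightarrow> v \<in> carrier_vec n \<Longrightarrow> f (y + z) v = f y v + f z v"
      using bil_add1[OF B] by blast
    have fa2: "\<And>y v w. y \<in> carrier_vec m \<Longrightarrow> v \<in> carrier_vec n \<Longrightarrow> w \<in> carrier_vec n \<Longrightarrow> f y (v + w) = f y v + f y w"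
      using bil_add2[OF B] by blast
    have step1: "g dvd f x v" if v: "v \<in> carrier_vec n" for v
    proof -
      define q where "q = f x v div g"
      define r where "r = f x v mod g"
      have dm: "f x v = q * g + r" unfolding q_def r_def by simp
      define w where "w = v + (-q) \<cdot>\<^sub>v v0"
      have wc: "w \<in> carrier_vec n" using v v0 by (simp add: w_def)
      have "f x w = f x v + (-q) * g" unfolding w_def using fa2[OF xc v] fsm2[OF xc v0] v0 fxg by simp
      then have "f x w = r" using dm by simp
      then have rT: "r \<in> T" using Tx0[OF wc] by simp
      have "r \<ge> 0" "r < g" using gpos by (auto simp: r_def)
      then have "r = 0" using gmin[OF rT] by force
      then show ?thesis using dm by simp
    qed
    have step2: "g dvd f p v0 \<and> g dvd f p w"
      if p: "p \<in> U'" and w: "w \<in> carrier_vec n" and xw: "f x w = 0" and pw: "f p w \<noteq> 0" for p w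
    proof -
      define a where "a = f p v0"
      define b where "b = f p w"
      obtain t where tt: "gcd (g + t * a) (t * b) dvd g" "gcd (g + t * a) (t * b) dvd a"
          "gcd (g + t * a) (t * b) dvd b"
        using lemB[OF gpos pw[folded b_def]] by blast
      define h where "h = gcd (g + t * a) (t * b)"
      obtain \<alpha> \<beta> where ab: "\<alpha> * (g + t * a) + \<beta> * (t * b) = h" unfolding h_def using bezout_int by blast
      have pc: "p \<in> carrier_vec m" using Uc[OF p] .
      have tp: "t \<cdot>\<^sub>v p \<in> U'" using subgrp_smult[OF S p] .
      have "f (x + t \<cdot>\<^sub>v p) (\<alpha> \<cdot>\<^sub>v v0 + \<beta> \<cdot>\<^sub>v w) = f x (\<alpha> \<cdot>\<^sub>v v0 + \<beta> \<cdot>\<^sub>v w) + t * f p (\<alpha> \<cdot>\<^sub>v v0 + \<beta> \<cdot>\<^sub>v w)"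
        using fa1[OF xc smult_carrier_vec[THEN iffD2, OF pc]] fsm1[OF pc] v0 w by simp
      also have "\<dots> = \<alpha> * g + \<beta> * 0 + t * (\<alpha> * a + \<beta> * b)"
        using fa2[OF xc] fa2[OF pc] fsm2[OF xc] fsm2[OF pc] v0 w fxg xw a_def b_def by simp
      also have "\<dots> = h" using ab by (simp add: algebra_simps)
      finally have hT: "h \<in> T" using Tx[OF tp] v0 w by (metis add_carrier_vec smult_carrier_vec)
      have "h \<noteq> 0" unfolding h_def using pw gpos b_def by (cases "t = 0") auto
      then have "h > 0" unfolding h_def by (simp add: order_le_neq_trans)
      then have "g \<le> h" using gmin hT by simp
      moreover have "h \<le> g" using tt(1) gpos h_def by (simp add: zdvd_imp_le)
      ultimately have "h = g" by simp
      then show ?thesis using tt h_def a_def b_def by simp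
    qed
    have decomp: "f x (v + (- (f x v div g)) \<cdot>\<^sub>v v0) = 0
        \<and> (\<forall>p\<in>U'. f p v = f p (v + (- (f x v div g)) \<cdot>\<^sub>v v0) + (f x v div g) * f p v0)"
      if v: "v \<in> carrier_vec n" for v
    proof -
      define k where "k = f x v div g"
      have fk: "f x v = k * g" using step1[OF v] unfolding k_def by simp
      have c: "(- k) \<cdot>\<^sub>v v0 \<in> carrier_vec n" using v0 by simp
      have "f x (v + (- k) \<cdot>\<^sub>v v0) = 0" using fa2[OF xc v c] fsm2[OF xc v0] fk fxg by simp
      moreover have "f p v = f p (v + (- k) \<cdot>\<^sub>v v0) + k * f p v0" if p: "p \<in> U'" for p
        using fa2[OF Uc[OF p] v c] fsm2[OF Uc[OF p] v0] by simp
      ultimately show ?thesis unfolding k_def by blast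
    qed
    have step3: "\<exists>q\<in>U'. \<exists>w\<in>carrier_vec n. f x w = 0 \<and> f q w \<noteq> 0"
    proof (rule ccontr)
      assume "\<not> ?thesis"
      then have z: "\<And>q w. q \<in> U' \<Longrightarrow> w \<in> carrier_vec n \<Longrightarrow> f x w = 0 \<Longrightarrow> f q w = 0" by blast
      have "\<forall>q\<in>U'. \<forall>v\<in>carrier_vec n. f q v = f q v0 * (f x v div g)"
      proof (intro ballI)
        fix q and v :: "int vec" assume q: "q \<in> U'" and v: "v \<in> carrier_vec n"
        have wc: "v + (- (f x v div g)) \<cdot>\<^sub>v v0 \<in> carrier_vec n" using v v0 by simp
        have e1: "f x (v + (- (f x v div g)) \<cdot>\<^sub>v v0) = 0" using decomp[OF v] by blast
        have e2: "f q v = f q (v + (- (f x v div g)) \<cdot>\<^sub>v v0) + (f x v div g) * f q v0"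
          using decomp[OF v] q by blast
        show "f q v = f q v0 * (f x v div g)" using e2 z[OF q wc e1] by simp
      qed
      then have "\<exists>(a::int vec \<Rightarrow> int) (s::int vec \<Rightarrow> int). \<forall>q\<in>U'. \<forall>v\<in>carrier_vec n. f q v = a q * s v"
        by (intro exI[of _ "\<lambda>q. f q v0"] exI[of _ "\<lambda>v. f x v div g"]) simp
      then show False using NR by blast
    qed
    then obtain q w where q: "q \<in> U'" and w: "w \<in> carrier_vec n" and xw: "f x w = 0" and qw: "f q w \<noteq> 0"
      by blast
    have step4: "g dvd f p v0" if p: "p \<in> U'" for p
    proof (cases "f p w = 0")
      case False
      then show ?thesis using step2[OF p w xw] by blast
    next
      case True
      have "f (p + q) w = f q w" using fa1[OF Uc[OF p] Uc[OF q] w] True by simp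
      then have "g dvd f (p + q) v0" using step2[OF Uadd[OF p q] w xw] qw by simp
      moreover have "f (p + q) v0 = f p v0 + f q v0" using fa1[OF Uc[OF p] Uc[OF q] v0] .
      moreover have "g dvd f q v0" using step2[OF q w xw qw] by blast
      ultimately show ?thesis by (simp add: dvd_add_left_iff)
    qed
    have step5: "g dvd f p v" if p: "p \<in> U'" and v: "v \<in> carrier_vec n" for p v
    proof -
      have wc: "v + (- (f x v div g)) \<cdot>\<^sub>v v0 \<in> carrier_vec n" using v v0 by simp
      have e1: "f x (v + (- (f x v div g)) \<cdot>\<^sub>v v0) = 0" using decomp[OF v] by blast
      have d1: "g dvd f p (v + (- (f x v div g)) \<cdot>\<^sub>v v0)"
      proof (cases "f p (v + (- (f x v div g)) \<cdot>\<^sub>v v0) = 0")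
        case True then show ?thesis by simp
      next
        case False then show ?thesis using step2[OF p wc e1 False] by blast
      qed
      have "f p v = f p (v + (- (f x v div g)) \<cdot>\<^sub>v v0) + (f x v div g) * f p v0" using decomp[OF v] p by blast
      then show ?thesis using d1 step4[OF p] by (metis dvd_add dvd_mult)
    qed
    have Teq: "T = {t. g dvd t}"
    proof
      show "T \<subseteq> {t. g dvd t}"
      proof
        fix t assume "t \<in> T"
        then obtain p v where p: "p \<in> U'" and v: "v \<in> carrier_vec n" and t: "t = f (u + p) v"
          unfolding T_def by blast
        have "f x v = f u v + f p0 v" unfolding x_def using fadd[OF p0 v] .
        then have "t = f x v - f p0 v + f p v" using t fadd[OF p v] by simp
        then show "t \<in> {t. g dvd t}" using step1[OF v] step5[OF p0 v] step5[OF p v] by simp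
      qed
      show "{t. g dvd t} \<subseteq> T"
      proof
        fix t assume "t \<in> {t. g dvd t}"
        then obtain c where c: "t = g * c" by blast
        have "f x (c \<cdot>\<^sub>v v0) = t" using fsm2[OF xc v0] fxg c by simp
        then show "t \<in> T" using Tx0[of "c \<cdot>\<^sub>v v0"] v0 by simp
      qed
    qed
    have sub: "int_subgroup T" unfolding Teq int_subgroup_def by auto
    moreover have "{f u' v | u' v. u' \<in> U' \<and> v \<in> carrier_vec n} \<subseteq> T"
      unfolding Teq using step5 by blast
    ultimately show ?thesis by blast
  qed
  then show ?thesis unfolding T_def .
qed



lemma basis_mem:
  assumes Z: "is_Z_basis m W bs" and i: "i < length bs"
  shows "bs ! i \<in> W"
proof -
  have bc: "bs ! i \<in> carrier_vec m" using Z i unfolding is_Z_basis_def by auto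
  have "int_comb m bs (\<lambda>l. if l = i then 1 else 0) = bs ! i"
  proof (rule eq_vecI)
    fix j assume "j < dim_vec (bs ! i)"
    then have j: "j < m" using bc by simp
    have "(\<Sum>l<length bs. (if l = i then 1 else 0) * bs ! l $ j) = (\<Sum>l<length bs. if l = i then bs ! l $ j else 0)"
      by (rule sum.cong) auto
    also have "\<dots> = bs ! i $ j" using i by simp
    finally show "int_comb m bs (\<lambda>l. if l = i then 1 else 0) $ j = bs ! i $ j"
      unfolding int_comb_def using j by simp
  qed (use bc in \<open>simp add: int_comb_def\<close>)
  then have "\<exists>c. bs ! i = int_comb m bs c \<and> True"
    by (intro exI[of _ "\<lambda>l. if l = i then 1 else 0"]) simp
  moreover have "W = {int_comb m bs c |c. True}" using Z unfolding is_Z_basis_def by blast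
  ultimately show ?thesis by simp
qed

theorem mainTheorem11:
  fixes m n :: nat and U' :: "int vec set" and f :: "int vec \<Rightarrow> int vec \<Rightarrow> int"
  assumes "vec_subgroup m U'"
    and "\<exists>bs. is_Z_basis m U' bs"
    and "bilinear_on m n f"
    and "restr_rank m n f U' \<ge> 2"
  shows "\<forall>u\<in>carrier_vec m.
           int_subgroup {f (u + u') v | u' v. u' \<in> U' \<and> v \<in> carrier_vec n}
         \<and> {f u' v | u' v. u' \<in> U' \<and> v \<in> carrier_vec n}
             \<subseteq> {f (u + u') v | u' v. u' \<in> U' \<and> v \<in> carrier_vec n}"
proof
  fix u :: "int vec" assume u: "u \<in> carrier_vec m"
  define bs where "bs = (SOME bs. is_Z_basis m U' bs)"
  have Z: "is_Z_basis m U' bs" unfolding bs_def using assms(2) by (rule someI_ex)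
  have rr: "restr_rank m n f U' = vec_space.rank (length bs) (restr_matrix n f bs)"
    by (simp add: restr_rank_def bs_def Let_def)
  have NR: "\<not> (\<exists>(a::int vec \<Rightarrow> int) (s::int vec \<Rightarrow> int). \<forall>q\<in>U'. \<forall>v\<in>carrier_vec n. f q v = a q * s v)"
  proof
    assume "\<exists>(a::int vec \<Rightarrow> int) (s::int vec \<Rightarrow> int). \<forall>q\<in>U'. \<forall>v\<in>carrier_vec n. f q v = a q * s v"
    then obtain a s where as: "\<And>q v. q \<in> U' \<Longrightarrow> v \<in> carrier_vec n \<Longrightarrow> f q v = a q * s v" by blast
    have "vec_space.rank (length bs) (restr_matrix n f bs) \<le> 1"
    proof (rule vec_space.rank_le_1_product_entries[where f = "\<lambda>r. rat_of_int (a (bs ! r))"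
          and g = "\<lambda>c. rat_of_int (s (unit_vec n c))"])
      show "restr_matrix n f bs \<in> carrier_mat (length bs) n" by (simp add: restr_matrix_def)
      fix r c assume r: "r < dim_row (restr_matrix n f bs)" and c: "c < dim_col (restr_matrix n f bs)"
      have r': "r < length bs" and c': "c < n" using r c by (auto simp: restr_matrix_def)
      have "f (bs ! r) (unit_vec n c) = a (bs ! r) * s (unit_vec n c)"
        using as[OF basis_mem[OF Z r']] c' by simp
      then show "restr_matrix n f bs $$ (r, c) = rat_of_int (a (bs ! r)) * rat_of_int (s (unit_vec n c))"
        using r' c' by (simp add: restr_matrix_def)
    qed
    then show False using assms(4) rr by simp
  qed
  show "int_subgroup {f (u + u') v | u' v. u' \<in> U' \<and> v \<in> carrier_vec n}
         \<and> {f u' v | u' v. u' \<in> U' \<and> v \<in> carrier_vec n}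
             \<subseteq> {f (u + u') v | u' v. u' \<in> U' \<and> v \<in> carrier_vec n}"
    by (rule key[OF assms(1) assms(3) u NR])
qed


end
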